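(* Let $X=\{(x,y,0)\in\mathbb{R}^3: x^2+y^2\le1\}$, $Y=\{(0,0,z)\in\mathbb{R}^3: z\in[0,1]\}$, $S=X\cup Y$, and $\mu=\mathcal H^2\llcorner X+\mathcal H^1\llcorner Y$. Then the function $u_0$ equal to $0$ on $X$ and to $1$ on $Y$ (defined $\mu$-a.e.) belongs to $H^{1,2}_\mu$ and satisfies $\nabla_\mu u_0=0$ $\mu$-a.e. Consequently $\dim\ker\nabla_\mu>1$ and the global Poincaré inequality $\|u-u_S\|^2_{L^2(\mu)}\le C\|\nabla_\mu u\|^2_{L^2(\mu)}$ for all $u\in H^{1,2}_\mu$, where $u_S=\mu(S)^{-1}\int u\,d\mu$, fails for every constant $C$.
   Context: Let $\mu$ be a positive finite Radon measure on $\mathbb{R}^N$. Set $\mathcal N_\mu=\{v\in C_c^\infty(\mathbb{R}^N): v=0\text{ on }\operatorname{supp}\mu\}$ and, for $x\in\mathbb{R}^N$, $N_\mu(x)=\{w(x): w\in C_c^\infty(\mathbb{R}^N;\mathbb{R}^N),\ \exists v\in\mathcal N_\mu\text{ with } w=\nabla v\text{ on }\operatorname{supp}\mu\}$. The tangent space $T_\mu(x)$ is the orthogonal complement of $N_\mu(x)$, and $\Pi_\mu(x)$ denotes the orthogonal projection onto $T_\mu(x)$. For $u\in C_c^\infty(\mathbb{R}^N)$, $\nabla_\mu u(x)=\Pi_\mu(x)\nabla u(x)$. $H^{1,2}_\mu$ is the completion of $C_c^\infty(\mathbb{R}^N)$ with respect to the norm $(\|u\|^2_{L^2(\mu)}+\|\nabla_\mu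 u\|^2_{L^2(\mu)})^{1/2}$, and $\nabla_\mu$ extends continuously to it; $\ker\nabla_\mu=\{u\in H^{1,2}_\mu:\nabla_\mu u=0\ \mu\text{-a.e.}\}$. For this $\mu$, $T_\mu(x)$ is the plane $\{z=0\}$ for $\mathcal H^2$-a.e. $x\in X$ and the line $\mathbb{R}e_3$ for $\mathcal H^1$-a.e. $x\in Y$. *)

theory Defs
  imports "HOL-Analysis.Analysis"
begin

fun Ck :: "nat \<Rightarrow> ('a::euclidean_space \<Rightarrow> 'b::real_normed_vector) \<Rightarrow> bool" where
  "Ck 0 f = continuous_on UNIV f"
| "Ck (Suc k) f = ((\<forall>x. f differentiable (at x)) \<and>
      (\<forall>v. Ck k (\<lambda>x. frechet_derivative f (at x) v)))"

definition smooth :: "('a::euclidean_space \<Rightarrow> 'b::real_normed_vector) \<Rightarrow> bool" where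
  "smooth f \<longleftrightarrow> (\<forall>k. Ck k f)"

definition Cc_inf :: "('a::euclidean_space \<Rightarrow> 'b::real_normed_vector) set" where
  "Cc_inf = {f. smooth f \<and> bounded {x. f x \<noteq> 0}}"

definition grad :: "(real^3 \<Rightarrow> real) \<Rightarrow> real^3 \<Rightarrow> real^3" where
  "grad f x = (\<chi> i. frechet_derivative f (at x) (axis i 1))"

definition embX :: "real^2 \<Rightarrow> real^3" where
  "embX p = vector [p$1, p$2, 0]"

definition embY :: "real \<Rightarrow> real^3" where
  "embY z = vector [0, 0, z]"

definition Xset :: "(real^3) set" where
  "Xset = {v. v$3 = 0 \<and> (v$1)^2 + (v$2)^2 \<le> 1}"

definition Yset :: "(real^3) set" where
  "Yset = {v. v$1 = 0 \<and> v$2 = 0 \<and> 0 \<le> v$3 \<and> v$3 \<le> 1}"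

definition Sset :: "(real^3) set" where
  "Sset = Xset \<union> Yset"

text \<open>H^2 restricted to the flat disc X: image of 2D Lebesgue measure on the unit disc
  under the isometric embedding (x,y) -> (x,y,0).\<close>
definition muX :: "(real^3) measure" where
  "muX = distr (density lborel (indicator {p::real^2. (p$1)^2 + (p$2)^2 \<le> 1})) borel embX"

text \<open>H^1 restricted to the segment Y: image of 1D Lebesgue measure on [0,1]
  under the isometric embedding z -> (0,0,z).\<close>
definition muY :: "(real^3) measure" where
  "muY = distr (density lborel (indicator {0..1::real})) borel embY"

definition mu :: "(real^3) measure" where
  "mu = measure_of UNIV (sets borel) (\<lambda>A. emeasure muX A + emeasure muY A)"

definition msupp :: "'a::metric_space measure \<Rightarrow> 'a set" where
  "msupp M = {x. \<forall>e>0. emeasure M (ball x e) > 0}"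

definition Nmu :: "(real^3 \<Rightarrow> real) set" where
  "Nmu = {v \<in> Cc_inf. \<forall>x \<in> msupp mu. v x = 0}"

definition Nmu_at :: "real^3 \<Rightarrow> (real^3) set" where
  "Nmu_at x = {w x | w. w \<in> Cc_inf \<and> (\<exists>v \<in> Nmu. \<forall>y \<in> msupp mu. w y = grad v y)}"

definition Tmu :: "real^3 \<Rightarrow> (real^3) set" where
  "Tmu x = orthogonal_comp (Nmu_at x)"

definition Pimu :: "real^3 \<Rightarrow> real^3 \<Rightarrow> real^3" where
  "Pimu x z = (THE p. p \<in> Tmu x \<and> z - p \<in> orthogonal_comp (Tmu x))"

definition grad_mu :: "(real^3 \<Rightarrow> real) \<Rightarrow> real^3 \<Rightarrow> real^3" where
  "grad_mu u x = Pimu x (grad u x)"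

text \<open>H^{1,2}_mu, the completion of C_c^infty under the graph norm, realised (isometrically)
  as the closure in L^2(mu) x L^2(mu;R^3) of the graph of grad_mu on C_c^infty:
  an element is a pair (u, g) with g = grad_mu u.\<close>
definition H12 :: "((real^3 \<Rightarrow> real) \<times> (real^3 \<Rightarrow> real^3)) set" where
  "H12 = {(u, g). u \<in> borel_measurable mu \<and> g \<in> borel_measurable mu \<and>
     (\<integral>\<^sup>+ x. ennreal ((u x)^2) \<partial>mu) < \<infinity> \<and>
     (\<integral>\<^sup>+ x. ennreal ((norm (g x))^2) \<partial>mu) < \<infinity> \<and>
     (\<exists>\<phi>. (\<forall>n. \<phi> n \<in> Cc_inf) \<and>
        (\<lambda>n. \<integral>\<^sup>+ x. ennreal ((\<phi> n x - u x)^2) \<partial>mu) \<longlonglongrightarrow> 0 \<and>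
        (\<lambda>n. \<integral>\<^sup>+ x. ennreal ((norm (grad_mu (\<phi> n) x - g x))^2) \<partial>mu) \<longlonglongrightarrow> 0)}"

definition ker_grad_mu :: "((real^3 \<Rightarrow> real) \<times> (real^3 \<Rightarrow> real^3)) set" where
  "ker_grad_mu = {(u, g) \<in> H12. AE x in mu. g x = 0}"

text \<open>u_0 = 0 on X, 1 on Y (mu-a.e.; X and Y meet only at the origin, a mu-null set).\<close>
definition u0 :: "real^3 \<Rightarrow> real" where
  "u0 x = (if x \<in> Yset then 1 else 0)"

end

theory Submission
  imports Defs "HOL-Computational_Algebra.Polynomial"
begin
lemma Ck_SucI:
  assumes "\<And>x. (f has_derivative D x) (at x)" "\<And>v. Ck k (\<lambda>x. D x v)"
  shows "Ck (Suc k) f"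
proof -
  have "frechet_derivative f (at x) = D x" for x
    using frechet_derivative_at[OF assms(1)] by simp
  then show ?thesis using assms by (auto simp: differentiable_def)
qed

lemma Ck_SucD:
  assumes "Ck (Suc k) f"
  shows "(f has_derivative frechet_derivative f (at x)) (at x)"
  using assms frechet_derivative_works by auto

lemma Ck_mono_Suc: "Ck (Suc k) f \<Longrightarrow> Ck k f"
proof (induction k arbitrary: f)
  case 0
  then show ?case
    by (simp add: continuous_at_imp_continuous_on differentiable_imp_continuous_within)
next
  case (Suc k)
  then show ?case by simp
qed

lemma Ck_mono: "k \<le> m \<Longrightarrow> Ck m f \<Longrightarrow> Ck k f"
proof (induction m rule: dec_induct)
  case base then show ?case .
next
  case (step n) then show ?case using Ck_mono_Suc by blast
qed

lemma Ck_const: "Ck k (\<lambda>x. c)"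
proof (induction k arbitrary: c)
  case 0 then show ?case by simp
next
  case (Suc k)
  show ?case by (rule Ck_SucI[where D="\<lambda>x v. 0"]) (auto intro: Suc)
qed

lemma Ck_linear: "bounded_linear L \<Longrightarrow> Ck k L"
proof (induction k)
  case 0 then show ?case by (simp add: linear_continuous_on)
next
  case (Suc k)
  show ?case by (rule Ck_SucI[where D="\<lambda>x. L"]) (auto intro: Ck_const bounded_linear_imp_has_derivative Suc)
qed

lemma Ck_add: "Ck k f \<Longrightarrow> Ck k g \<Longrightarrow> Ck k (\<lambda>x. f x + g x)"
proof (induction k arbitrary: f g)
  case 0 then show ?case by (simp add: continuous_on_add)
next
  case (Suc k)
  show ?case
    apply (rule Ck_SucI[where D="\<lambda>x v. frechet_derivative f (at x) v + frechet_derivative g (at x) v"])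
     apply (rule has_derivative_add[OF Ck_SucD[OF Suc.prems(1)] Ck_SucD[OF Suc.prems(2)]])
    using Suc by auto
qed

lemma Ck_mult:
  fixes f g :: "'a::euclidean_space \<Rightarrow> real"
  shows "Ck k f \<Longrightarrow> Ck k g \<Longrightarrow> Ck k (\<lambda>x. f x * g x)"
proof (induction k arbitrary: f g)
  case 0 then show ?case by (simp add: continuous_on_mult)
next
  case (Suc k)
  show ?case
    apply (rule Ck_SucI[where D="\<lambda>x v. f x * frechet_derivative g (at x) v + frechet_derivative f (at x) v * g x"])
     apply (rule has_derivative_mult[OF Ck_SucD[OF Suc.prems(1)] Ck_SucD[OF Suc.prems(2)]])
    apply (rule Ck_add; rule Suc.IH)
    using Suc.prems Ck_mono_Suc by auto
qed

lemma Ck_cmult: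
  fixes f :: "'a::euclidean_space \<Rightarrow> real"
  shows "Ck k f \<Longrightarrow> Ck k (\<lambda>x. c * f x)"
  by (rule Ck_mult[OF Ck_const])

lemma Ck_uminus:
  fixes f :: "'a::euclidean_space \<Rightarrow> real"
  shows "Ck k f \<Longrightarrow> Ck k (\<lambda>x. - f x)"
  using Ck_cmult[of k f "-1"] by simp

lemma Ck_diff:
  fixes f :: "'a::euclidean_space \<Rightarrow> real"
  shows "Ck k f \<Longrightarrow> Ck k g \<Longrightarrow> Ck k (\<lambda>x. f x - g x)"
  using Ck_add[OF _ Ck_uminus, of k f g] by simp

lemma Ck_inverse:
  fixes f :: "'a::euclidean_space \<Rightarrow> real"
  shows "Ck k f \<Longrightarrow> (\<And>x. f x \<noteq> 0) \<Longrightarrow> Ck k (\<lambda>x. inverse (f x))"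
proof (induction k arbitrary: f)
  case 0 then show ?case by (simp add: continuous_on_inverse)
next
  case (Suc k)
  have "Ck k (\<lambda>x. inverse (f x))" using Suc Ck_mono_Suc by blast
  then show ?case
    apply (intro Ck_SucI[where D="\<lambda>x v. - (inverse (f x) * frechet_derivative f (at x) v * inverse (f x))"])
     apply (rule Deriv.has_derivative_inverse[OF Suc.prems(2) Ck_SucD[OF Suc.prems(1)]])
    apply (intro Ck_uminus Ck_mult)
    using Suc by auto
qed

lemma Ck_divide:
  fixes f :: "'a::euclidean_space \<Rightarrow> real"
  shows "Ck k f \<Longrightarrow> Ck k g \<Longrightarrow> (\<And>x. g x \<noteq> 0) \<Longrightarrow> Ck k (\<lambda>x. f x / g x)"
  using Ck_mult[OF _ Ck_inverse, of k f g] by (simp add: divide_inverse)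

lemma Ck_ln:
  fixes f :: "'a::euclidean_space \<Rightarrow> real"
  assumes A: "Ck k f" "\<And>x. f x > 0"
  shows "Ck k (\<lambda>x. ln (f x))"
proof (cases k)
  case 0
  then show ?thesis using A
    by (auto intro!: continuous_on_ln) (metis A(2) less_irrefl)
next
  case (Suc m)
  have d: "((\<lambda>x. ln (f x)) has_derivative (\<lambda>v. frechet_derivative f (at x) v * inverse (f x))) (at x)" for x
  proof -
    have "(ln has_derivative (*) (inverse (f x))) (at (f x))"
      using A(2)[of x] by (intro has_field_derivative_imp_has_derivative DERIV_ln) 
    from has_derivative_compose[OF Ck_SucD[OF A(1)[unfolded Suc]] this] show ?thesis
      by (simp add: mult.commute)
  qed
  have "Ck m (\<lambda>x. inverse (f x))" using A Suc Ck_mono_Suc Ck_inverse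
    by (metis less_irrefl)
  show ?thesis unfolding Suc
    apply (rule Ck_SucI[OF d])
    apply (rule Ck_mult)
    using A Suc \<open>Ck m (\<lambda>x. inverse (f x))\<close> by auto
qed

lemma Ck_comp:
  fixes h :: "real \<Rightarrow> real" and f :: "'a::euclidean_space \<Rightarrow> real"
  shows "Ck k h \<Longrightarrow> Ck k f \<Longrightarrow> Ck k (\<lambda>x. h (f x))"
proof (induction k arbitrary: h f)
  case 0 then show ?case
    by simp (metis continuous_on_compose2 continuous_on_subset subset_UNIV)
next
  case (Suc k)
  define h' where "h' = (\<lambda>y. frechet_derivative h (at y) 1)"
  have lin: "frechet_derivative h (at y) t = t * h' y" for y t
  proof -
    have "linear (frechet_derivative h (at y))"
      using Ck_SucD[OF Suc.prems(1)] has_derivative_linear by blast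
    then have "frechet_derivative h (at y) (t *\<^sub>R 1) = t *\<^sub>R frechet_derivative h (at y) 1"
      using linear_scale by blast
    then show ?thesis by (simp add: h'_def)
  qed
  have d: "((\<lambda>x. h (f x)) has_derivative (\<lambda>v. frechet_derivative f (at x) v * h' (f x))) (at x)" for x
    using has_derivative_compose[OF Ck_SucD[OF Suc.prems(2)] Ck_SucD[OF Suc.prems(1)]]
    by (simp add: lin)
  have "Ck k h'" using Suc.prems(1) by (simp add: h'_def)
  then have "Ck k (\<lambda>x. h' (f x))" using Suc Ck_mono_Suc by blast
  then show ?case
    apply (rule_tac Ck_SucI[OF d])
    apply (rule Ck_mult)
    using Suc by auto
qed

lemma Ck_real_SucI:
  fixes h :: "real \<Rightarrow> real"
  assumes "\<And>x. (h has_real_derivative h' x) (at x)" "Ck k h'"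
  shows "Ck (Suc k) h"
  apply (rule Ck_SucI[where D="\<lambda>x. (*) (h' x)"])
   apply (rule has_field_derivative_imp_has_derivative[OF assms(1)])
  using Ck_mult[OF assms(2) Ck_const] by auto

definition Fp :: "real poly \<Rightarrow> real \<Rightarrow> real" where
  "Fp P t = (if 0 < t then poly P (inverse t) * exp (- inverse t) else 0)"

definition Qp :: "real poly \<Rightarrow> real poly" where
  "Qp P = [:0,0,1:] * (P - pderiv P)"

lemma poly_exp_lim: fixes P :: "real poly" shows "((\<lambda>y. poly P y * exp (- y)) \<longlongrightarrow> 0) at_top"
proof -
  have "((\<lambda>y. \<Sum>i\<le>degree P. coeff P i * (y ^ i / exp y)) \<longlongrightarrow> (\<Sum>i\<le>degree P. coeff P i * 0)) at_top"
    by (intro tendsto_sum tendsto_mult tendsto_const tendsto_power_div_exp_0)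
  moreover have "poly P y * exp (-y) = (\<Sum>i\<le>degree P. coeff P i * (y ^ i / exp y))" for y
    by (simp add: poly_altdef sum_distrib_right exp_minus divide_inverse mult.assoc)
  ultimately show ?thesis by simp
qed

lemma Fp_lim0: "(Fp P \<longlongrightarrow> 0) (at 0)"
proof (rule filterlim_split_at_real)
  have "eventually (\<lambda>t. 0 = Fp P t) (at_left (0::real))"
    by (auto simp: eventually_at_filter Fp_def)
  then show "(Fp P \<longlongrightarrow> 0) (at_left 0)"
    by (rule tendsto_eventually[OF eventually_mono]) auto
  have ev: "eventually (\<lambda>t. poly P (inverse t) * exp (- inverse t) = Fp P t) (at_right (0::real))"
    by (auto simp: eventually_at_filter Fp_def)
  moreover have "((\<lambda>t. poly P (inverse t) * exp (- inverse t)) \<longlongrightarrow> 0) (at_right 0)"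
    using filterlim_compose[OF poly_exp_lim filterlim_inverse_at_top_right] by simp
  ultimately show "(Fp P \<longlongrightarrow> 0) (at_right 0)"
    using tendsto_cong[OF ev] by blast
qed

lemma Fp_deriv: "(Fp P has_real_derivative Fp (Qp P) t) (at t)"
proof (cases "t > 0")
  case True
  have i: "(inverse has_real_derivative - (inverse t ^ Suc (Suc 0))) (at t)"
    using True by (intro DERIV_inverse) auto
  note p = DERIV_chain2[OF poly_DERIV i, of P]
  note e = DERIV_chain2[OF DERIV_exp DERIV_minus[OF i]]
  have d: "((\<lambda>t. poly P (inverse t) * exp (- inverse t)) has_real_derivative Fp (Qp P) t) (at t)"
    apply (rule DERIV_cong[OF DERIV_mult[OF p e]])
    using True by (simp add: Fp_def Qp_def algebra_simps power2_eq_square)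
  show ?thesis
    apply (rule has_field_derivative_transform_within_open[OF d, where S="{0<..}"])
    using True by (auto simp: Fp_def)
next
  case False
  show ?thesis
  proof (cases "t < 0")
    case True
    have z: "Fp (Qp P) t = 0" using True by (simp add: Fp_def)
    show ?thesis unfolding z
      apply (rule has_field_derivative_transform_within_open[OF DERIV_const[of 0], where S="{..<0}"])
      using True by (auto simp: Fp_def)
  next
    case False
    with \<open>\<not> t > 0\<close> have t: "t = 0" by simp
    have "((\<lambda>y. (Fp P y - Fp P 0) / (y - 0)) \<longlongrightarrow> 0) (at 0)"
    proof (rule tendsto_cong[THEN iffD1, OF _ Fp_lim0[of "[:0,1:] * P"]])
      show "\<forall>\<^sub>F x in at 0. Fp ([:0, 1:] * P) x = (Fp P x - Fp P 0) / (x - 0)"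
        by (auto simp: eventually_at_filter Fp_def divide_inverse)
    qed
    then show ?thesis unfolding t has_field_derivative_iff by (simp add: Fp_def)
  qed
qed

lemma Fp_Ck: "Ck k (Fp P)"
proof (induction k arbitrary: P)
  case 0
  then show ?case
    by (simp add: continuous_at_imp_continuous_on DERIV_isCont[OF Fp_deriv])
next
  case (Suc k)
  then show ?case by (rule Ck_real_SucI[OF Fp_deriv])
qed

definition psi :: "real \<Rightarrow> real" where "psi = Fp 1"

lemma psi_Ck: "Ck k psi" unfolding psi_def by (rule Fp_Ck)
lemma psi_pos: "t > 0 \<Longrightarrow> psi t > 0" by (simp add: psi_def Fp_def)
lemma psi_zero: "t \<le> 0 \<Longrightarrow> psi t = 0" by (simp add: psi_def Fp_def)
lemma psi_nonneg: "psi t \<ge> 0" by (simp add: psi_def Fp_def)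

definition sq3 :: "real^3 \<Rightarrow> real" where "sq3 p = p$1*p$1 + p$2*p$2 + p$3*p$3"
definition chi :: "real^3 \<Rightarrow> real" where
  "chi p = psi (9 - sq3 p) / (psi (9 - sq3 p) + psi (sq3 p - 4))"
definition NN :: "nat \<Rightarrow> real" where "NN n = real (Suc n)"
definition gg :: "nat \<Rightarrow> real^3 \<Rightarrow> real" where "gg n p = exp (- NN n) + p$1*p$1 + p$2*p$2"
definition eta :: "nat \<Rightarrow> real^3 \<Rightarrow> real" where "eta n p = - ln (gg n p) / NN n"
definition phi :: "nat \<Rightarrow> real^3 \<Rightarrow> real" where "phi n p = chi p * eta n p"

lemma NN_pos: "NN n > 0" by (simp add: NN_def)
lemma gg_pos: "gg n p > 0"
  unfolding gg_def by (intro add_pos_nonneg) auto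

lemma Ck_nth: "Ck k (\<lambda>p::real^'n. p$i)"
  by (rule Ck_linear[OF bounded_linear_vec_nth])

lemma sq3_Ck: "Ck k sq3"
  unfolding sq3_def[abs_def] by (intro Ck_add Ck_mult Ck_nth)

lemma gg_Ck: "Ck k (gg n)"
  unfolding gg_def[abs_def] by (intro Ck_add Ck_mult Ck_nth Ck_const)

lemma chi_den_pos: "psi (9 - sq3 p) + psi (sq3 p - 4) > 0"
proof (cases "sq3 p < 9")
  case True
  then show ?thesis using psi_pos[of "9 - sq3 p"] psi_nonneg[of "sq3 p - 4"] by simp
next
  case False
  then show ?thesis using psi_pos[of "sq3 p - 4"] psi_nonneg[of "9 - sq3 p"] by simp
qed

lemma chi_Ck: "Ck k chi"
  unfolding chi_def[abs_def]
  apply (rule Ck_divide)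
  apply (rule Ck_comp[OF psi_Ck]; intro Ck_diff Ck_const sq3_Ck)
  apply (intro Ck_add; rule Ck_comp[OF psi_Ck]; intro Ck_diff Ck_const sq3_Ck)
  using chi_den_pos by (metis less_irrefl)

lemma eta_Ck: "Ck k (eta n)"
  unfolding eta_def[abs_def]
  apply (rule Ck_divide)
    apply (intro Ck_uminus Ck_ln gg_Ck gg_pos)
  by (auto intro: Ck_const simp: NN_def)

lemma phi_Ck: "Ck k (phi n)"
  unfolding phi_def[abs_def] by (intro Ck_mult chi_Ck eta_Ck)

lemma sq3_nonneg: "sq3 p \<ge> 0" by (simp add: sq3_def)

lemma chi_nz: "chi p \<noteq> 0 \<Longrightarrow> sq3 p < 9"
  by (metis chi_def div_0 linorder_not_le psi_zero diff_le_0_iff_le)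

lemma bounded_sq3: "bounded {p. sq3 p < 9}"
proof -
  have "{p. sq3 p < 9} \<subseteq> cbox (\<chi> i. -3) (\<chi> i. 3)"
  proof
    fix p assume "p \<in> {p. sq3 p < 9}"
    then have h: "p$1*p$1 + p$2*p$2 + p$3*p$3 < 9" by (simp add: sq3_def)
    have "\<bar>p$i\<bar> \<le> 3" for i
    proof -
      have nn: "0 \<le> p$j * p$j" for j by simp
      have "p$i * p$i < 9"
        using exhaust_3[of i] by (elim disjE) (use h nn[of 1] nn[of 2] nn[of 3] in \<open>hypsubst; linarith\<close>)+
      then have "\<bar>p$i\<bar> * \<bar>p$i\<bar> < 3 * 3" by (simp add: abs_mult_self_eq)
      then show ?thesis
      proof (rule contrapos_pp)
        assume "\<not> \<bar>p$i\<bar> \<le> 3"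
        then have "3 * 3 \<le> \<bar>p$i\<bar> * \<bar>p$i\<bar>" by (intro mult_mono) auto
        then show "\<not> \<bar>p$i\<bar> * \<bar>p$i\<bar> < 3 * 3" by linarith
      qed
    qed
    then show "p \<in> cbox (\<chi> i. -3) (\<chi> i. 3)" unfolding mem_box_cart by (simp add: abs_le_iff) (smt (verit))
  qed
  then show ?thesis using bounded_cbox bounded_subset by blast
qed

lemma chi_Cc: "chi \<in> Cc_inf"
  unfolding Cc_inf_def smooth_def
  using chi_Ck chi_nz by (auto intro: bounded_subset[OF bounded_sq3])

lemma phi_Cc: "phi n \<in> Cc_inf"
  unfolding Cc_inf_def smooth_def
  using phi_Ck chi_nz by (auto simp: phi_def intro: bounded_subset[OF bounded_sq3])

lemma Pimu_props: "norm (Pimu x z) \<le> norm z \<and> (z = 0 \<longrightarrow> Pimu x z = 0)"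
proof -
  let ?T = "Tmu x"
  have sT: "subspace ?T" unfolding Tmu_def by (rule subspace_orthogonal_comp)
  have sT': "subspace (?T\<^sup>\<bottom>)" by (rule subspace_orthogonal_comp)
  have "z \<in> ?T + ?T\<^sup>\<bottom>" using subspace_sum_orthogonal_comp[OF sT] by simp
  then obtain a b where ab: "a \<in> ?T" "b \<in> ?T\<^sup>\<bottom>" "z = a + b"
    by (rule set_plus_elim) blast
  have P: "Pimu x z = a"
    unfolding Pimu_def
  proof (rule the_equality)
    show "a \<in> ?T \<and> z - a \<in> ?T\<^sup>\<bottom>" using ab by simp
    fix p assume p: "p \<in> ?T \<and> z - p \<in> ?T\<^sup>\<bottom>"
    have "a - p = (z - p) - b" using ab by simp
    then have "a - p \<in> ?T\<^sup>\<bottom>" using p ab subspace_diff[OF sT', of "z - p" b] by simp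
    moreover have "a - p \<in> ?T" using p ab sT by (simp add: subspace_diff)
    ultimately have "a - p = 0" using orthogonal_Int_0[OF sT] by blast
    then show "p = a" by simp
  qed
  have orth: "orthogonal a b" using ab unfolding orthogonal_comp_def by auto
  have "(norm z)^2 = (norm a)^2 + (norm b)^2" using ab(3) norm_add_Pythagorean[OF orth] by simp
  then have "(norm a)^2 \<le> (norm z)^2" by simp
  then have n: "norm a \<le> norm z" by (rule power2_le_imp_le) simp
  show ?thesis using P n by auto
qed

lemma norm_grad_mu_le: "norm (grad_mu f x) \<le> norm (grad f x)"
  unfolding grad_mu_def using Pimu_props by blast

lemma grad_mu_zero: "grad f x = 0 \<Longrightarrow> grad_mu f x = 0"
  unfolding grad_mu_def using Pimu_props by blast

lemma grad_local:
  assumes "open U" "p \<in> U" "\<And>x. x \<in> U \<Longrightarrow> f x = g x" "(g has_derivative D) (at p)"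
  shows "grad f p = (\<chi> i. D (axis i 1))"
proof -
  have "(f has_derivative D) (at p)"
    using has_derivative_transform_within_open[OF assms(4) assms(1,2)] assms(3) by metis
  then show ?thesis unfolding grad_def using frechet_derivative_at by metis
qed

lemma open_U4: "open {p. sq3 p < 4}"
proof -
  have "continuous_on UNIV sq3" using sq3_Ck[of 0] by simp
  then show ?thesis using open_Collect_less[of sq3 "\<lambda>_. 4"] by (simp add: continuous_on_const)
qed

lemma chi_one: "sq3 p < 4 \<Longrightarrow> chi p = 1"
  unfolding chi_def using psi_zero[of "sq3 p - 4"] psi_pos[of "9 - sq3 p"] by simp

lemma grad_chi: "sq3 p < 4 \<Longrightarrow> grad chi p = 0"
  using grad_local[OF open_U4, of p chi "\<lambda>_. 1" "\<lambda>_. 0"] chi_one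
  by (simp add: vec_eq_iff)

lemma norm_sq_3: "(norm (x::real^3))^2 = x$1*x$1 + x$2*x$2 + x$3*x$3"
  by (simp add: power2_norm_eq_inner inner_vec_def sum_3)

definition GB :: "nat \<Rightarrow> real^3 \<Rightarrow> real" where
  "GB n p = 4 * (p$1*p$1 + p$2*p$2) / ((NN n)^2 * (gg n p)^2)"

lemma grad_phi:
  assumes "sq3 p < 4"
  shows "(norm (grad (phi n) p))^2 = GB n p"
proof -
  have d1: "((\<lambda>p::real^3. p$i) has_derivative (\<lambda>v. v$i)) (at p)" for i
    by (rule bounded_linear_imp_has_derivative[OF bounded_linear_vec_nth])
  have dg: "(gg n has_derivative (\<lambda>v. 0 + (p$1 * v$1 + v$1 * p$1) + (p$2 * v$2 + v$2 * p$2))) (at p)"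
    unfolding gg_def[abs_def]
    by (intro has_derivative_add has_derivative_mult d1 has_derivative_const)
  have dln: "(ln has_derivative (*) (inverse (gg n p))) (at (gg n p))"
    using gg_pos[of n p] by (intro has_field_derivative_imp_has_derivative DERIV_ln)
  have de: "((\<lambda>x. ln (gg n x) * (- inverse (NN n))) has_derivative
      (\<lambda>v. inverse (gg n p) * (0 + (p$1 * v$1 + v$1 * p$1) + (p$2 * v$2 + v$2 * p$2)) * (- inverse (NN n)))) (at p)"
    by (rule has_derivative_mult_left[OF has_derivative_compose[OF dg dln]])
  have eq: "phi n x = ln (gg n x) * (- inverse (NN n))" if "x \<in> {p. sq3 p < 4}" for x
    using that chi_one by (simp add: phi_def eta_def divide_inverse)
  have g: "grad (phi n) p = (\<chi> i. inverse (gg n p) * (0 + (p$1 * axis i 1 $ 1 + axis i 1 $ 1 * p$1) + (p$2 * axis i 1 $ 2 + axis i 1 $ 2 * p$2)) * (- inverse (NN n)))"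
    using grad_local[OF open_U4 _ eq de] assms by simp
  show ?thesis
    unfolding norm_sq_3 g GB_def using NN_pos[of n] gg_pos[of n p]
    by (simp add: axis_def field_simps power2_eq_square)
qed

lemma gg_zero: "p$1 = 0 \<Longrightarrow> p$2 = 0 \<Longrightarrow> gg n p = exp (- NN n)"
  by (simp add: gg_def)

lemma eta_at0: "p$1 = 0 \<Longrightarrow> p$2 = 0 \<Longrightarrow> eta n p = 1"
  using NN_pos[of n] by (simp add: eta_def gg_def)

definition D2 :: "(real^2) set" where "D2 = {p. (p$1)^2 + (p$2)^2 \<le> 1}"

lemma embX_nth [simp]: "embX q $ 1 = q$1" "embX q $ 2 = q$2" "embX q $ 3 = 0"
  by (simp_all add: embX_def)
lemma embY_nth [simp]: "embY z $ 1 = 0" "embY z $ 2 = 0" "embY z $ 3 = z"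
  by (simp_all add: embY_def)

lemma embX_eq: "embX = (\<lambda>q. \<chi> i. if i = 1 then q$1 else if i = 2 then q$2 else 0)"
  by (rule ext) (simp add: vec_eq_iff forall_3)
lemma embY_eq: "embY = (\<lambda>z. \<chi> i. if i = 3 then z else 0)"
  by (rule ext) (simp add: vec_eq_iff forall_3)

lemma cont_nth: "continuous_on UNIV (\<lambda>p::real^'n. p$i)"
  using Ck_nth[of 0 i] by simp

lemma embX_meas[measurable]: "embX \<in> borel_measurable borel"
  unfolding embX_eq
  apply (intro borel_measurable_continuous_onI continuous_on_vec_lambda)
  subgoal for i by (cases "i = 1"; cases "i = 2") (simp_all add: cont_nth continuous_on_const)
  done
lemma embY_meas[measurable]: "embY \<in> borel_measurable borel"
  unfolding embY_eq
  apply (intro borel_measurable_continuous_onI continuous_on_vec_lambda)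
  subgoal for i by (cases "i = 3") (simp_all add: continuous_on_id continuous_on_const)
  done

lemma D2_meas[measurable]: "D2 \<in> sets borel" unfolding D2_def by measurable
lemma Xset_meas[measurable]: "Xset \<in> sets borel" unfolding Xset_def by measurable
lemma Yset_meas[measurable]: "Yset \<in> sets borel" unfolding Yset_def by measurable
lemma Sset_meas[measurable]: "Sset \<in> sets borel" unfolding Sset_def by measurable

lemma muX_D2: "muX = distr (density lborel (indicator D2)) borel embX"
  unfolding muX_def D2_def ..

lemma sets_muX[simp, measurable_cong]: "sets muX = sets borel" unfolding muX_def by simp
lemma sets_muY[simp, measurable_cong]: "sets muY = sets borel" unfolding muY_def by simp
lemma space_muX[simp]: "space muX = UNIV" unfolding muX_def by simp
lemma space_muY[simp]: "space muY = UNIV" unfolding muY_def by simp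

lemma nn_muX:
  assumes [measurable]: "f \<in> borel_measurable borel"
  shows "(\<integral>\<^sup>+ x. f x \<partial>muX) = (\<integral>\<^sup>+ q. indicator D2 q * f (embX q) \<partial>lborel)"
  unfolding muX_D2
  by (subst nn_integral_distr) (auto simp: nn_integral_density)

lemma nn_muY:
  assumes [measurable]: "f \<in> borel_measurable borel"
  shows "(\<integral>\<^sup>+ x. f x \<partial>muY) = (\<integral>\<^sup>+ z. indicator {0..1} z * f (embY z) \<partial>lborel)"
  unfolding muY_def
  by (subst nn_integral_distr) (auto simp: nn_integral_density)

lemma mu_ok:
  shows "sigma_algebra UNIV (sets borel)"
    "positive (sets borel) (\<lambda>A. emeasure muX A + emeasure muY A)"
    "countably_additive (sets borel) (\<lambda>A. emeasure muX A + emeasure muY A)"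
proof -
  show "sigma_algebra UNIV (sets borel)"
    using sets.sigma_algebra_axioms[of borel] by simp
  show "positive (sets borel) (\<lambda>A. emeasure muX A + emeasure muY A)"
    unfolding positive_def by simp
  show "countably_additive (sets borel) (\<lambda>A. emeasure muX A + emeasure muY A)"
    unfolding countably_additive_def
  proof (intro allI impI)
    fix A :: "nat \<Rightarrow> (real^3) set"
    assume A: "range A \<subseteq> sets borel" "disjoint_family A"
    have "(\<Sum>i. emeasure muX (A i) + emeasure muY (A i)) = (\<Sum>i. emeasure muX (A i)) + (\<Sum>i. emeasure muY (A i))"
      by (rule suminf_add[symmetric]) auto
    also have "\<dots> = emeasure muX (\<Union>i. A i) + emeasure muY (\<Union>i. A i)"
      using A by (simp add: suminf_emeasure)
    finally show "(\<Sum>i. emeasure muX (A i) + emeasure muY (A i)) = emeasure muX (\<Union> (range A)) + emeasure muY (\<Union> (range A))" .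
  qed
qed

lemma sets_mu[simp, measurable_cong]: "sets mu = sets borel"
  unfolding mu_def using mu_ok(1) sigma_algebra.sets_measure_of_eq by blast

lemma space_mu[simp]: "space mu = UNIV"
  unfolding mu_def by (simp add: space_measure_of_conv)

lemma emeasure_mu: "A \<in> sets borel \<Longrightarrow> emeasure mu A = emeasure muX A + emeasure muY A"
  unfolding mu_def using emeasure_measure_of_sigma[OF mu_ok] by blast

lemma meas_transfer:
  assumes "f \<in> borel_measurable borel"
  shows "f \<in> borel_measurable mu" "f \<in> borel_measurable muX" "f \<in> borel_measurable muY"
  using assms measurable_cong_sets[OF sets_mu refl, of borel] measurable_cong_sets[OF sets_muX refl, of borel]
    measurable_cong_sets[OF sets_muY refl, of borel] by auto

lemma nn_integral_mu:
  fixes f :: "real^3 \<Rightarrow> ennreal"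
  assumes "f \<in> borel_measurable borel"
  shows "(\<integral>\<^sup>+ x. f x \<partial>mu) = (\<integral>\<^sup>+ x. f x \<partial>muX) + (\<integral>\<^sup>+ x. f x \<partial>muY)"
  using assms
proof (induction rule: borel_measurable_induct)
  case (cong f g)
  then have "f = g" by auto
  then show ?case using cong by simp
next
  case (set A)
  then show ?case by (simp add: emeasure_mu)
next
  case (mult u c)
  note m = meas_transfer[OF \<open>u \<in> borel_measurable borel\<close>]
  have "(\<integral>\<^sup>+ x. c * u x \<partial>mu) = c * (\<integral>\<^sup>+ x. u x \<partial>mu)" by (rule nn_integral_cmult[OF m(1)])
  also have "\<dots> = c * (\<integral>\<^sup>+ x. u x \<partial>muX) + c * (\<integral>\<^sup>+ x. u x \<partial>muY)"
    using \<open>integral\<^sup>N mu u = integral\<^sup>N muX u + integral\<^sup>N muY u\<close> by (simp add: distrib_left)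
  also have "\<dots> = (\<integral>\<^sup>+ x. c * u x \<partial>muX) + (\<integral>\<^sup>+ x. c * u x \<partial>muY)"
    by (simp add: nn_integral_cmult[OF m(2)] nn_integral_cmult[OF m(3)])
  finally show ?case .
next
  case (add u v)
  note mu = meas_transfer[OF \<open>u \<in> borel_measurable borel\<close>] and mv = meas_transfer[OF \<open>v \<in> borel_measurable borel\<close>]
  have "(\<integral>\<^sup>+ x. v x + u x \<partial>mu) = (\<integral>\<^sup>+ x. v x \<partial>mu) + (\<integral>\<^sup>+ x. u x \<partial>mu)"
    by (rule nn_integral_add[OF mv(1) mu(1)])
  also have "\<dots> = ((\<integral>\<^sup>+ x. v x \<partial>muX) + (\<integral>\<^sup>+ x. u x \<partial>muX)) + ((\<integral>\<^sup>+ x. v x \<partial>muY) + (\<integral>\<^sup>+ x. u x \<partial>muY))"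
    unfolding \<open>integral\<^sup>N mu u = integral\<^sup>N muX u + integral\<^sup>N muY u\<close>
      \<open>integral\<^sup>N mu v = integral\<^sup>N muX v + integral\<^sup>N muY v\<close> by (simp only: ac_simps)
  also have "\<dots> = (\<integral>\<^sup>+ x. v x + u x \<partial>muX) + (\<integral>\<^sup>+ x. v x + u x \<partial>muY)"
    by (simp only: nn_integral_add[OF mv(2) mu(2)] nn_integral_add[OF mv(3) mu(3)])
  finally show ?case .
next
  case (seq U)
  have m: "U i \<in> borel_measurable mu" "U i \<in> borel_measurable muX" "U i \<in> borel_measurable muY" for i
    using meas_transfer seq by blast+
  have e: "(\<integral>\<^sup>+ x. (SUP i. U i) x \<partial>M) = (SUP i. integral\<^sup>N M (U i))"
    if "\<And>i. U i \<in> borel_measurable M" for M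
    using nn_integral_monotone_convergence_SUP[of U M, OF \<open>incseq U\<close> that] by (simp add: SUP_apply image_comp)
  have inc: "incseq (\<lambda>i. integral\<^sup>N M (U i))" for M
    using \<open>incseq U\<close> by (auto simp: incseq_def le_fun_def intro!: nn_integral_mono)
  have ih: "integral\<^sup>N mu (U i) = integral\<^sup>N muX (U i) + integral\<^sup>N muY (U i)" for i
    using seq by blast
  show ?case unfolding e[OF m(1)] e[OF m(2)] e[OF m(3)] ih
    by (rule ennreal_SUP_add[OF inc inc])
qed

definition Qb :: "nat \<Rightarrow> (real^2) set" where
  "Qb k = cbox (\<chi> i. - ((1/2)^k)) (\<chi> i. (1/2)^k)"

lemma Qb_meas[measurable]: "Qb k \<in> sets borel" unfolding Qb_def by simp

lemma emeasure_cube2: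
  fixes \<alpha> \<beta> :: real
  assumes "\<alpha> \<le> \<beta>"
  shows "emeasure lborel (cbox (\<chi> i::2. \<alpha>) (\<chi> i. \<beta>)) = ennreal ((\<beta> - \<alpha>)^2)"
proof -
  have b: "b \<in> Basis \<Longrightarrow> (\<chi> i::2. c) \<bullet> b = c" for b c
    by (auto simp: Basis_vec_def inner_axis)
  have "card (Basis :: (real^2) set) = 2"
    using DIM_cart[where 'a=real and 'b=2] by simp
  then show ?thesis
    using assms by (simp add: emeasure_lborel_cbox_eq b inner_diff_left)
qed

lemma emeasure_Qb: "emeasure lborel (Qb k) = ennreal ((2 * (1/2)^k)^2)"
  unfolding Qb_def by (subst emeasure_cube2) auto

lemma mem_Qb: "q \<in> Qb k \<longleftrightarrow> \<bar>q$1\<bar> \<le> (1/2)^k \<and> \<bar>q$2\<bar> \<le> (1/2)^k"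
  unfolding Qb_def mem_box_cart by (auto simp: forall_2 abs_le_iff)

lemma dyad_exists:
  fixes m :: real
  shows "(1/2)^K < m \<Longrightarrow> m \<le> 1 \<Longrightarrow> \<exists>k<K. (1/2)^Suc k < m \<and> m \<le> (1/2)^k"
proof (induction K)
  case 0 then show ?case by simp
next
  case (Suc K)
  show ?case
  proof (cases "(1/2)^K < m")
    case True then show ?thesis using Suc by (meson less_SucI)
  next
    case False then show ?thesis using Suc by auto
  qed
qed

lemma abs_le_of_sq: "x * x \<le> c * c \<Longrightarrow> 0 \<le> c \<Longrightarrow> \<bar>x::real\<bar> \<le> c"
  using abs_le_square_iff[of x c] by (simp add: power2_eq_square)

lemma pointwise_dyad:
  fixes q :: "real^2" and E :: real
  assumes q: "q \<in> D2" and E: "E > 0"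
  shows "1 / (E + (q$1*q$1 + q$2*q$2)) \<le> (1/E) * indicator (Qb K) q + (\<Sum>k<K. 4^Suc k * indicator (Qb k) q)"
proof -
  define s where "s = q$1*q$1 + q$2*q$2"
  define m where "m = max \<bar>q$1\<bar> \<bar>q$2\<bar>"
  have n1: "0 \<le> q$1*q$1" and n2: "0 \<le> q$2*q$2" by simp_all
  have s0: "s \<ge> 0" by (simp add: s_def)
  have "m * m = q$1*q$1 \<or> m * m = q$2*q$2"
    unfolding m_def max_def by (simp add: abs_mult_self_eq)
  then have sq: "m * m \<le> s" unfolding s_def using n1 n2 by linarith
  have "q$1 * q$1 + q$2 * q$2 \<le> 1" using q by (simp add: D2_def power2_eq_square)
  then have "q$1 * q$1 \<le> 1 * 1" "q$2 * q$2 \<le> 1 * 1" using n1 n2 by linarith+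
  then have "\<bar>q$1\<bar> \<le> 1" "\<bar>q$2\<bar> \<le> 1" by (simp_all add: abs_le_of_sq)
  then have m1: "m \<le> 1" unfolding m_def by simp
  have nn: "0 \<le> (\<Sum>k<K. 4^Suc k * indicator (Qb k) q :: real)"
    by (intro sum_nonneg) auto
  have le1: "1 / (E + s) \<le> 1/E" using E s0 by (intro divide_left_mono) auto
  show ?thesis
  proof (cases "m \<le> (1/2)^K")
    case True
    then have "q \<in> Qb K" unfolding mem_Qb m_def by simp
    then have "1/E \<le> (1/E) * indicator (Qb K) q + (\<Sum>k<K. 4^Suc k * indicator (Qb k) q)"
      using nn by simp
    then show ?thesis using le1 unfolding s_def by linarith
  next
    case False
    then obtain k where k: "k < K" "(1/2)^Suc k < m" "m \<le> (1/2)^k"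
      using dyad_exists[of K m] m1 by auto
    then have inq: "q \<in> Qb k" unfolding mem_Qb m_def by simp
    have "((1/2)^Suc k) * ((1/2)^Suc k) < m * m"
      using k(2) order.strict_trans[OF zero_less_power[of "1/2::real" "Suc k"] k(2)]
      by (intro mult_strict_mono) auto
    moreover have "((1/2::real)^Suc k) * ((1/2)^Suc k) = (1/4)^Suc k"
      by (simp add: power_mult_distrib[symmetric])
    ultimately have lt: "(1/4::real)^Suc k < s" using sq by linarith
    have sp: "0 < s" using order.strict_trans[OF zero_less_power[of "1/4::real" "Suc k"] lt] by simp
    have "1 / s < 1 / (1/4)^Suc k"
      using lt sp by (intro divide_strict_left_mono) auto
    also have "1 / (1/4::real)^Suc k = 4^Suc k" by (simp add: power_one_over)
    finally have a: "1 / s < 4^Suc k" .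
    have "1 / (E + s) \<le> 1 / s"
      using E sp by (intro divide_left_mono) auto
    also have "\<dots> \<le> 4 ^ Suc k" using a by simp
    also have "(4::real) ^ Suc k = 4^Suc k * indicator (Qb k) q" using inq by simp
    also have "\<dots> \<le> (\<Sum>k<K. 4^Suc k * indicator (Qb k) q)"
      using k(1) by (intro member_le_sum) auto
    also have "\<dots> \<le> (1/E) * indicator (Qb K) q + (\<Sum>k<K. 4^Suc k * indicator (Qb k) q)"
      using E by simp
    finally show ?thesis unfolding s_def .
  qed
qed

lemma GB_embX: "GB n (embX q) = 4 * (q$1*q$1 + q$2*q$2) / ((NN n)^2 * (exp (- NN n) + (q$1*q$1 + q$2*q$2))^2)"
  by (simp add: GB_def gg_def add.assoc)

lemma GB_embY: "GB n (embY z) = 0"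
  by (simp add: GB_def)

lemma GB_le:
  fixes s E N :: real
  assumes "0 \<le> s" "E > 0" "N > 0"
  shows "4 * s / (N^2 * (E + s)^2) \<le> (4 / N^2) * (1 / (E + s))"
proof -
  have g: "E + s > 0" using assms by simp
  have "4 * s / (N^2 * (E + s)^2) = (4 / N^2) * (1 / (E + s)) * (s / (E + s))"
    using g assms by (simp add: power2_eq_square field_simps)
  also have "\<dots> \<le> (4 / N^2) * (1 / (E + s)) * 1"
    using g assms by (intro mult_left_mono) (auto simp: divide_le_eq_1)
  finally show ?thesis by simp
qed

lemma ennreal_mult_ind: "ennreal (x * indicator A y) = ennreal x * indicator A y"
  by (simp split: split_indicator)

lemma term16: "(4::real) ^ Suc k * (2 * (1/2)^k)^2 = 16"
proof -
  have "(4::real)^k * ((1/2)^k * (1/2)^k) = 1" by (simp add: power_mult_distrib[symmetric])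
  then show ?thesis by (simp add: power2_eq_square algebra_simps)
qed

lemma expK: "exp (real K) * (2 * (1/2)^K)^2 \<le> (4::real)"
proof -
  have "exp (real K) = exp 1 ^ K" using exp_of_nat_mult[of K 1] by simp
  also have "\<dots> \<le> 4 ^ K" using exp_le by (intro power_mono) auto
  finally have a: "exp (real K) \<le> 4 ^ K" .
  have "(2 * (1/2::real)^K)^2 = 4 * (1/4)^K" by (simp add: power2_eq_square power_mult_distrib[symmetric])
  then have "exp (real K) * (2 * (1/2)^K)^2 \<le> 4^K * (4 * (1/4)^K)"
    using a by (simp add: mult_right_mono)
  also have "\<dots> = 4" by (simp add: power_mult_distrib[symmetric])
  finally show ?thesis .
qed

lemma X_grad_bound:
  "(\<integral>\<^sup>+ q. indicator D2 q * ennreal (GB n (embX q)) \<partial>lborel) \<le> ennreal (80 / NN n)"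
proof -
  define N where "N = NN n"
  define E where "E = exp (- N)"
  define K where "K = Suc n"
  define c where "c = 4 / N^2"
  have N: "N > 0" "N = real K" unfolding N_def K_def NN_def by auto
  have E: "E > 0" unfolding E_def by simp
  have c: "c > 0" unfolding c_def using N by simp
  have pw: "indicator D2 q * ennreal (GB n (embX q)) \<le>
      ennreal (c/E) * indicator (Qb K) q + (\<Sum>k<K. ennreal (c * 4^Suc k) * indicator (Qb k) q)" for q
  proof (cases "q \<in> D2")
    case False then show ?thesis by simp
  next
    case True
    have "GB n (embX q) = 4 * (q$1*q$1 + q$2*q$2) / (N^2 * (E + (q$1*q$1 + q$2*q$2))^2)"
      unfolding GB_embX E_def N_def ..
    also have "\<dots> \<le> c * (1 / (E + (q$1*q$1 + q$2*q$2)))"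
      unfolding c_def by (rule GB_le) (use N E in auto)
    also have "\<dots> \<le> c * ((1/E) * indicator (Qb K) q + (\<Sum>k<K. 4^Suc k * indicator (Qb k) q))"
      using pointwise_dyad[OF True E, of K] c by (intro mult_left_mono) auto
    also have "\<dots> = c/E * indicator (Qb K) q + (\<Sum>k<K. c * 4^Suc k * indicator (Qb k) q)"
      by (simp add: distrib_left sum_distrib_left mult.assoc)
    finally have r: "GB n (embX q) \<le> c/E * indicator (Qb K) q + (\<Sum>k<K. c * 4^Suc k * indicator (Qb k) q)" .
    have "ennreal (c/E * indicator (Qb K) q + (\<Sum>k<K. c * 4^Suc k * indicator (Qb k) q))
       = ennreal (c/E) * indicator (Qb K) q + (\<Sum>k<K. ennreal (c * 4^Suc k) * indicator (Qb k) q)"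
    proof -
      have nn: "0 \<le> c * 4 ^ Suc k * indicator (Qb k) q" for k using c by simp
      have "(\<Sum>k<K. ennreal (c * 4^Suc k) * indicator (Qb k) q) = (\<Sum>k<K. ennreal (c * 4^Suc k * indicator (Qb k) q))"
        by (simp only: ennreal_mult_ind)
      also have "\<dots> = ennreal (\<Sum>k<K. c * 4^Suc k * indicator (Qb k) q)"
        by (rule sum_ennreal) (rule nn)
      finally have s: "(\<Sum>k<K. ennreal (c * 4^Suc k) * indicator (Qb k) q) = ennreal (\<Sum>k<K. c * 4^Suc k * indicator (Qb k) q)" .
      have "ennreal (c/E * indicator (Qb K) q + (\<Sum>k<K. c * 4^Suc k * indicator (Qb k) q))
         = ennreal (c/E * indicator (Qb K) q) + ennreal (\<Sum>k<K. c * 4^Suc k * indicator (Qb k) q)"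
        by (rule ennreal_plus) (use c E nn in \<open>auto intro!: sum_nonneg\<close>)
      also have "\<dots> = ennreal (c/E) * indicator (Qb K) q + (\<Sum>k<K. ennreal (c * 4^Suc k) * indicator (Qb k) q)"
        by (simp only: s ennreal_mult_ind)
      finally show ?thesis .
    qed
    then show ?thesis using True ennreal_leI[OF r] by simp
  qed
  have "(\<integral>\<^sup>+ q. indicator D2 q * ennreal (GB n (embX q)) \<partial>lborel) \<le>
      (\<integral>\<^sup>+ q. ennreal (c/E) * indicator (Qb K) q + (\<Sum>k<K. ennreal (c * 4^Suc k) * indicator (Qb k) q) \<partial>lborel)"
    by (rule nn_integral_mono) (rule pw)
  also have "\<dots> = ennreal (c/E) * emeasure lborel (Qb K) + (\<Sum>k<K. ennreal (c * 4^Suc k) * emeasure lborel (Qb k))"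
  proof -
    have Q: "Qb k \<in> sets lborel" for k by simp
    have m1: "(\<lambda>q. ennreal (c/E) * indicator (Qb K) q) \<in> borel_measurable lborel" by measurable
    have m2: "(\<lambda>q. \<Sum>k<K. ennreal (c*4^Suc k) * indicator (Qb k) q) \<in> borel_measurable lborel" by measurable
    have m3: "(\<lambda>q. ennreal (c*4^Suc k) * indicator (Qb k) q) \<in> borel_measurable lborel" for k by measurable
    show ?thesis
      apply (subst nn_integral_add[OF m1 m2])
      apply (subst nn_integral_sum[OF m3])
      apply (simp only: nn_integral_cmult_indicator[OF Q])
      done
  qed
  also have "\<dots> = ennreal (c/E * (2 * (1/2)^K)^2 + (\<Sum>k<K. c * 4^Suc k * (2 * (1/2)^k)^2))"
    using c E by (simp add: emeasure_Qb ennreal_mult[symmetric] ennreal_plus sum_nonneg sum_ennreal)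
  also have "\<dots> \<le> ennreal (80 / NN n)"
  proof (rule ennreal_leI)
    have s: "(\<Sum>k<K. c * 4^Suc k * (2 * (1/2)^k)^2) = 16 * c * real K"
    proof -
      have "(\<Sum>k<K. c * 4^Suc k * (2 * (1/2)^k)^2) = (\<Sum>k<K. c * 16)"
        by (rule sum.cong) (simp_all only: mult.assoc term16)
      then show ?thesis by simp
    qed
    have "c/E * (2 * (1/2)^K)^2 = c * (exp (real K) * (2 * (1/2)^K)^2)"
      unfolding E_def using N by (simp add: exp_minus field_simps)
    also have "\<dots> \<le> c * 4" using c expK by (intro mult_left_mono) auto
    finally have a: "c/E * (2 * (1/2)^K)^2 \<le> 4 * c" by simp
    have "4 * c + 16 * c * real K \<le> 80 / N"
      unfolding c_def N(2)[symmetric] using N by (simp add: field_simps power2_eq_square)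
    then show "c/E * (2 * (1/2)^K)^2 + (\<Sum>k<K. c * 4^Suc k * (2 * (1/2)^k)^2) \<le> 80 / NN n"
      using a s unfolding N_def by linarith
  qed
  finally show ?thesis .
qed

lemma embX_X: "q \<in> D2 \<Longrightarrow> embX q \<in> Xset"
  by (simp add: D2_def Xset_def)
lemma embY_Y: "z \<in> {0..1} \<Longrightarrow> embY z \<in> Yset"
  by (simp add: Yset_def)

lemma S_sq3: "x \<in> Sset \<Longrightarrow> sq3 x < 4"
proof -
  assume "x \<in> Sset"
  then consider "x \<in> Xset" | "x \<in> Yset" unfolding Sset_def by blast
  then show "sq3 x < 4"
  proof cases
    case 1 then show ?thesis by (simp add: Xset_def sq3_def power2_eq_square)
  next
    case 2
    then have "x$3 * x$3 \<le> 1 * 1" by (intro mult_mono) (auto simp: Yset_def)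
    with 2 show ?thesis by (simp add: Yset_def sq3_def)
  qed
qed

lemma AE_S: "AE x in mu. x \<in> Sset"
proof (rule AE_I'[of "- Sset"])
  have cS: "- Sset \<in> sets borel" by measurable
  have "emeasure muX (- Sset) = (\<integral>\<^sup>+ q. indicator D2 q * indicator (- Sset) (embX q) \<partial>lborel)"
    using nn_muX[of "indicator (- Sset)"] cS by simp
  also have "\<dots> = 0"
  proof -
    have z0: "indicator D2 q * indicator (- Sset) (embX q) = (0::ennreal)" for q
      by (auto simp: Sset_def dest: embX_X split: split_indicator)
    show ?thesis by (simp only: z0) simp
  qed
  finally have a: "emeasure muX (- Sset) = 0" .
  have "emeasure muY (- Sset) = (\<integral>\<^sup>+ z. indicator {0..1} z * indicator (- Sset) (embY z) \<partial>lborel)"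
    using nn_muY[of "indicator (- Sset)"] cS by simp
  also have "\<dots> = 0"
  proof -
    have z0: "indicator {0..1} z * indicator (- Sset) (embY z) = (0::ennreal)" for z
      using embY_Y[of z] by (auto simp: Sset_def split: split_indicator)
    show ?thesis by (simp only: z0) simp
  qed
  finally have b: "emeasure muY (- Sset) = 0" .
  show "- Sset \<in> null_sets mu" using a b cS by (auto simp: emeasure_mu)
qed auto

lemma mu_finite: "emeasure mu UNIV < \<infinity>"
proof -
  have "emeasure muX UNIV = (\<integral>\<^sup>+ q. indicator D2 q * indicator UNIV (embX q) \<partial>lborel)"
    using nn_muX[of "indicator UNIV"] by simp
  also have "\<dots> = emeasure lborel D2" by simp
  also have "\<dots> \<le> emeasure lborel (Qb 0)"
  proof (rule emeasure_mono)
    show "D2 \<subseteq> Qb 0"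
    proof
      fix q assume "q \<in> D2"
      then have "q$1 * q$1 + q$2 * q$2 \<le> 1" by (simp add: D2_def power2_eq_square)
      moreover have "0 \<le> q$1 * q$1" "0 \<le> q$2 * q$2" by simp_all
      ultimately have "q$1 * q$1 \<le> 1 * 1" "q$2 * q$2 \<le> 1 * 1" by linarith+
      then show "q \<in> Qb 0" unfolding mem_Qb by (simp add: abs_le_of_sq)
    qed
  qed simp
  also have "\<dots> < \<infinity>" by (simp add: emeasure_Qb)
  finally have a: "emeasure muX UNIV < \<infinity>" .
  have "emeasure muY UNIV = (\<integral>\<^sup>+ z. indicator {0..1} z * indicator UNIV (embY z) \<partial>lborel)"
    using nn_muY[of "indicator UNIV"] by simp
  also have "\<dots> = 1" by simp
  finally have b: "emeasure muY UNIV < \<infinity>" by simp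
  show ?thesis using a b by (simp add: emeasure_mu)
qed

lemma fin_mu: "finite_measure mu"
  using mu_finite by (intro finite_measureI) auto

lemma phi_meas[measurable]: "phi n \<in> borel_measurable borel"
  using phi_Ck[of 0 n] by (intro borel_measurable_continuous_onI) simp
lemma chi_meas[measurable]: "chi \<in> borel_measurable borel"
  using chi_Ck[of 0] by (intro borel_measurable_continuous_onI) simp
lemma u0_meas[measurable]: "u0 \<in> borel_measurable borel"
  unfolding u0_def[abs_def] by measurable

lemma GB_Ck: "Ck k (GB n)"
  unfolding GB_def[abs_def] power2_eq_square
  apply (rule Ck_divide)
    apply (intro Ck_mult Ck_add Ck_nth Ck_const)
   apply (intro Ck_mult Ck_const gg_Ck)
  using NN_pos gg_pos by (metis mult_pos_pos less_irrefl)

lemma GB_meas[measurable]: "GB n \<in> borel_measurable borel"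
  using GB_Ck[of 0 n] by (intro borel_measurable_continuous_onI) simp

lemma GB_nonneg: "GB n p \<ge> 0"
  unfolding GB_def using NN_pos[of n] gg_pos[of n p] by (intro divide_nonneg_pos) auto

lemma grad_L2:
  "(\<lambda>n. \<integral>\<^sup>+ x. ennreal ((norm (grad_mu (phi n) x - 0))^2) \<partial>mu) \<longlonglongrightarrow> 0"
proof (rule tendsto_sandwich[where f="\<lambda>_. 0" and h="\<lambda>n. ennreal (80 / NN n)"])
  show "\<forall>\<^sub>F n in sequentially. 0 \<le> \<integral>\<^sup>+ x. ennreal ((norm (grad_mu (phi n) x - 0))^2) \<partial>mu"
    by simp
  show "\<forall>\<^sub>F n in sequentially. (\<integral>\<^sup>+ x. ennreal ((norm (grad_mu (phi n) x - 0))^2) \<partial>mu) \<le> ennreal (80 / NN n)"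
  proof (intro always_eventually allI)
    fix n
    have "(\<integral>\<^sup>+ x. ennreal ((norm (grad_mu (phi n) x - 0))^2) \<partial>mu) \<le> (\<integral>\<^sup>+ x. ennreal (GB n x) \<partial>mu)"
    proof (rule nn_integral_mono_AE)
      show "AE x in mu. ennreal ((norm (grad_mu (phi n) x - 0))^2) \<le> ennreal (GB n x)"
        using AE_S
      proof eventually_elim
        case (elim x)
        then have s: "sq3 x < 4" by (rule S_sq3)
        have "(norm (grad_mu (phi n) x))^2 \<le> (norm (grad (phi n) x))^2"
          using norm_grad_mu_le by (intro power_mono) auto
        then show ?case using grad_phi[OF s, of n] by (intro ennreal_leI) simp
      qed
    qed
    also have "\<dots> = (\<integral>\<^sup>+ x. ennreal (GB n x) \<partial>muX) + (\<integral>\<^sup>+ x. ennreal (GB n x) \<partial>muY)"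
      by (rule nn_integral_mu) measurable
    also have "(\<integral>\<^sup>+ x. ennreal (GB n x) \<partial>muY) = 0"
      by (subst nn_muY) (simp_all add: GB_embY)
    also have "(\<integral>\<^sup>+ x. ennreal (GB n x) \<partial>muX) = (\<integral>\<^sup>+ q. indicator D2 q * ennreal (GB n (embX q)) \<partial>lborel)"
      by (rule nn_muX) measurable
    also have "\<dots> \<le> ennreal (80 / NN n)" by (rule X_grad_bound)
    finally show "(\<integral>\<^sup>+ x. ennreal ((norm (grad_mu (phi n) x - 0))^2) \<partial>mu) \<le> ennreal (80 / NN n)" by simp
  qed
  have "(\<lambda>n. 80 / real (Suc n)) \<longlonglongrightarrow> 0"
    using LIMSEQ_Suc[OF lim_const_over_n[of "80::real"]] by simp
  then have "(\<lambda>n. ennreal (80 / NN n)) \<longlonglongrightarrow> ennreal 0"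
    unfolding NN_def by (rule tendsto_ennrealI)
  then show "(\<lambda>n. ennreal (80 / NN n)) \<longlonglongrightarrow> 0" by simp
qed simp

definition hh :: "nat \<Rightarrow> real \<Rightarrow> real" where "hh n s = - ln (exp (- NN n) + s) / NN n"

lemma hh_bound:
  assumes "0 \<le> s" "s \<le> 1"
  shows "(hh n s)^2 \<le> 1"
proof -
  define N where "N = NN n"
  have N: "N \<ge> 1" unfolding N_def NN_def by simp
  have p: "exp (- N) + s > 0" using assms by (simp add: add_pos_nonneg)
  have "exp (- N) \<le> 1" using N by simp
  then have "exp (- N) + s \<le> 2" using assms by linarith
  then have "ln (exp (- N) + s) \<le> ln 2" using p by simp
  also have "\<dots> < 1" by (rule ln_2_less_1)
  finally have u: "ln (exp (- N) + s) \<le> N" using N by simp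
  have "ln (exp (- N)) \<le> ln (exp (- N) + s)" using assms p by (subst ln_le_cancel_iff) auto
  then have l: "- N \<le> ln (exp (- N) + s)" by simp
  have "\<bar>hh n s\<bar> \<le> 1" unfolding hh_def N_def[symmetric] using N u l
    by (auto simp: abs_le_iff divide_le_eq le_divide_eq)
  then show ?thesis using abs_le_square_iff[of "hh n s" 1] by simp
qed

lemma hh_lim:
  assumes "s > 0"
  shows "(\<lambda>n. hh n s) \<longlonglongrightarrow> 0"
proof -
  have N: "filterlim (\<lambda>n. NN n) at_top sequentially"
    unfolding NN_def
    using filterlim_compose[OF filterlim_real_sequentially filterlim_Suc] by (simp add: o_def)
  have e: "(\<lambda>n. exp (- NN n)) \<longlonglongrightarrow> 0"
    using filterlim_compose[OF exp_at_bot filterlim_uminus_at_bot_at_top[THEN filterlim_compose, OF N]]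
    by (simp add: filterlim_at_bot_mirror)
  have "(\<lambda>n. ln (exp (- NN n) + s)) \<longlonglongrightarrow> ln (0 + s)"
    using assms by (intro tendsto_ln tendsto_add e tendsto_const) auto
  then have "(\<lambda>n. - ln (exp (- NN n) + s)) \<longlonglongrightarrow> - ln s" by (intro tendsto_minus) simp
  then have "(\<lambda>n. - ln (exp (- NN n) + s) / NN n) \<longlonglongrightarrow> 0"
    by (rule tendsto_divide_0) (rule filterlim_at_top_imp_at_infinity[OF N])
  then show ?thesis unfolding hh_def .
qed

lemma chi_S: "x \<in> Sset \<Longrightarrow> chi x = 1"
  using chi_one S_sq3 by blast

lemma u0_embX:
  "u0 (embX q) = (if q$1*q$1 + q$2*q$2 = 0 then 1 else 0)"
  unfolding u0_def Yset_def by (simp add: sum_squares_eq_zero_iff)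

lemma X_val:
  assumes "q \<in> D2"
  shows "(phi n (embX q) - u0 (embX q))^2 = (if q$1*q$1 + q$2*q$2 = 0 then 0 else (hh n (q$1*q$1 + q$2*q$2))^2)"
proof -
  have "embX q \<in> Sset" using embX_X[OF assms] by (simp add: Sset_def)
  then have c: "chi (embX q) = 1" by (rule chi_S)
  have ph: "phi n (embX q) = hh n (q$1*q$1 + q$2*q$2)"
    by (simp add: phi_def c eta_def gg_def hh_def add.assoc)
  show ?thesis
  proof (cases "q$1*q$1 + q$2*q$2 = 0")
    case True
    have "hh n 0 = 1" using NN_pos[of n] by (simp add: hh_def)
    then show ?thesis unfolding ph u0_embX if_P[OF True] True by simp
  next
    case False
    then show ?thesis unfolding ph u0_embX if_not_P[OF False] by simp
  qed
qed

lemma D2_s: "q \<in> D2 \<Longrightarrow> 0 \<le> q$1*q$1 + q$2*q$2 \<and> q$1*q$1 + q$2*q$2 \<le> 1"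
  by (simp add: D2_def power2_eq_square)

lemma D2_fin: "emeasure lborel D2 < \<infinity>"
proof -
  have "emeasure lborel D2 \<le> emeasure lborel (Qb 0)"
  proof (rule emeasure_mono)
    show "D2 \<subseteq> Qb 0"
    proof
      fix q assume "q \<in> D2"
      then have "q$1 * q$1 + q$2 * q$2 \<le> 1" by (simp add: D2_def power2_eq_square)
      moreover have "0 \<le> q$1 * q$1" "0 \<le> q$2 * q$2" by simp_all
      ultimately have "q$1 * q$1 \<le> 1 * 1" "q$2 * q$2 \<le> 1 * 1" by linarith+
      then show "q \<in> Qb 0" unfolding mem_Qb by (simp add: abs_le_of_sq)
    qed
  qed simp
  also have "\<dots> < \<infinity>" by (simp add: emeasure_Qb)
  finally show ?thesis .
qed

lemma phi_Y: "z \<in> {0..1} \<Longrightarrow> phi n (embY z) = 1 \<and> u0 (embY z) = 1"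
proof -
  assume z: "z \<in> {0..1}"
  have "embY z \<in> Sset" using embY_Y[OF z] by (simp add: Sset_def)
  then have "chi (embY z) = 1" by (rule chi_S)
  then show ?thesis using eta_at0[of "embY z" n] embY_Y[OF z] by (simp add: phi_def u0_def)
qed

lemma phi_L2: "(\<lambda>n. \<integral>\<^sup>+ x. ennreal ((phi n x - u0 x)^2) \<partial>mu) \<longlonglongrightarrow> 0"
proof -
  define U where "U n q = indicator D2 q * ennreal ((phi n (embX q) - u0 (embX q))^2)" for n q
  have eq: "(\<integral>\<^sup>+ x. ennreal ((phi n x - u0 x)^2) \<partial>mu) = (\<integral>\<^sup>+ q. U n q \<partial>lborel)" for n
  proof -
    have "(\<integral>\<^sup>+ x. ennreal ((phi n x - u0 x)^2) \<partial>mu) =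
       (\<integral>\<^sup>+ x. ennreal ((phi n x - u0 x)^2) \<partial>muX) + (\<integral>\<^sup>+ x. ennreal ((phi n x - u0 x)^2) \<partial>muY)"
      by (rule nn_integral_mu) measurable
    also have "(\<integral>\<^sup>+ x. ennreal ((phi n x - u0 x)^2) \<partial>muY) = 0"
    proof -
      have "(\<integral>\<^sup>+ x. ennreal ((phi n x - u0 x)^2) \<partial>muY) =
          (\<integral>\<^sup>+ z. indicator {0..1} z * ennreal ((phi n (embY z) - u0 (embY z))^2) \<partial>lborel)"
        by (rule nn_muY) measurable
      also have "\<dots> = 0"
      proof -
        have z0: "indicator {0..1} z * ennreal ((phi n (embY z) - u0 (embY z))^2) = 0" for z
          using phi_Y[of z n] by (cases "z \<in> {0..1}") auto
        show ?thesis by (simp only: z0) simp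
      qed
      finally show ?thesis .
    qed
    also have "(\<integral>\<^sup>+ x. ennreal ((phi n x - u0 x)^2) \<partial>muX) = (\<integral>\<^sup>+ q. U n q \<partial>lborel)"
      unfolding U_def by (rule nn_muX) measurable
    finally show ?thesis by simp
  qed
  have "(\<lambda>n. \<integral>\<^sup>+ q. U n q \<partial>lborel) \<longlonglongrightarrow> (\<integral>\<^sup>+ (q::real^2). 0 \<partial>lborel)"
  proof (rule nn_integral_dominated_convergence[where w="indicator D2"])
    show "U i \<in> borel_measurable lborel" for i unfolding U_def by measurable
    show "(\<lambda>q. 0) \<in> borel_measurable lborel" by simp
    show "indicator D2 \<in> borel_measurable lborel" by measurable
    show "AE x in lborel. U j x \<le> indicator D2 x" for j
    proof (rule AE_I2)
      fix q
      show "U j q \<le> indicator D2 q"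
      proof (cases "q \<in> D2")
        case True
        have "(phi j (embX q) - u0 (embX q))^2 \<le> 1"
          using X_val[OF True, of j] hh_bound[of "q$1*q$1 + q$2*q$2" j] D2_s[OF True] by simp
        then show ?thesis using True unfolding U_def by (simp add: ennreal_leI[where y=1, simplified])
      qed (simp add: U_def)
    qed
    show "(\<integral>\<^sup>+ x. indicator D2 x \<partial>lborel) < \<infinity>" using D2_fin by simp
    show "AE x in lborel. (\<lambda>i. U i x) \<longlonglongrightarrow> 0"
    proof (rule AE_I2)
      fix q
      show "(\<lambda>i. U i q) \<longlonglongrightarrow> 0"
      proof (cases "q \<in> D2 \<and> q$1*q$1 + q$2*q$2 \<noteq> 0")
        case True
        then have s: "q$1*q$1 + q$2*q$2 > 0" using D2_s[of q] by (simp add: order.not_eq_order_implies_strict)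
        have "(\<lambda>i. (hh i (q$1*q$1 + q$2*q$2))^2) \<longlonglongrightarrow> 0^2"
          by (intro tendsto_power hh_lim[OF s])
        then have "(\<lambda>i. ennreal ((hh i (q$1*q$1 + q$2*q$2))^2)) \<longlonglongrightarrow> ennreal 0"
          by (intro tendsto_ennrealI) simp
        moreover have "U i q = ennreal ((hh i (q$1*q$1 + q$2*q$2))^2)" for i
          unfolding U_def X_val[OF conjunct1[OF True]] if_not_P[OF conjunct2[OF True]]
          using True by simp
        ultimately show ?thesis by simp
      next
        case False
        have "U i q = 0" for i
        proof (cases "q \<in> D2")
          case True
          with False have z: "q$1*q$1 + q$2*q$2 = 0" by simp
          show ?thesis unfolding U_def X_val[OF True] if_P[OF z] by simp
        qed (simp add: U_def)
        then show ?thesis by simp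
      qed
    qed
  qed
  then show ?thesis unfolding eq by simp
qed

lemma chi_bounds: "0 \<le> chi x \<and> chi x \<le> 1"
  unfolding chi_def using chi_den_pos[of x] psi_nonneg[of "9 - sq3 x"] psi_nonneg[of "sq3 x - 4"]
  by (auto simp: divide_le_eq_1)

lemma sq_int_fin:
  fixes f :: "real^3 \<Rightarrow> real"
  assumes "\<And>x. (f x)^2 \<le> 1"
  shows "(\<integral>\<^sup>+ x. ennreal ((f x)^2) \<partial>mu) < \<infinity>"
proof -
  have "(\<integral>\<^sup>+ x. ennreal ((f x)^2) \<partial>mu) \<le> (\<integral>\<^sup>+ x. 1 \<partial>mu)"
    using assms by (intro nn_integral_mono) (simp add: ennreal_leI[where y=1, simplified])
  also have "\<dots> = emeasure mu UNIV" by simp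
  also have "\<dots> < \<infinity>" by (rule mu_finite)
  finally show ?thesis .
qed

lemma u0_H12: "(u0, (\<lambda>_. 0)) \<in> H12"
proof -
  have "u0 \<in> borel_measurable mu" by measurable
  moreover have "(\<lambda>_. 0 :: real^3) \<in> borel_measurable mu" by simp
  moreover have "(\<integral>\<^sup>+ x. ennreal ((u0 x)^2) \<partial>mu) < \<infinity>"
    by (rule sq_int_fin) (simp add: u0_def)
  moreover have "(\<integral>\<^sup>+ x. ennreal ((norm (0::real^3))^2) \<partial>mu) < \<infinity>" by simp
  moreover have "\<forall>n. phi n \<in> Cc_inf" using phi_Cc by blast
  ultimately show ?thesis unfolding H12_def using phi_L2 grad_L2 by blast
qed

lemma grad_chi_L2: "(\<integral>\<^sup>+ x. ennreal ((norm (grad_mu chi x - 0))^2) \<partial>mu) = 0"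
proof -
  have "AE x in mu. ennreal ((norm (grad_mu chi x - 0))^2) = 0"
    using AE_S
  proof eventually_elim
    case (elim x)
    then show ?case using grad_mu_zero[OF grad_chi[OF S_sq3[OF elim]]] by simp
  qed
  then have "(\<integral>\<^sup>+ x. ennreal ((norm (grad_mu chi x - 0))^2) \<partial>mu) = (\<integral>\<^sup>+ x. 0 \<partial>mu)"
    by (rule nn_integral_cong_AE)
  then show ?thesis by simp
qed

lemma chi_H12: "(chi, (\<lambda>_. 0)) \<in> H12"
proof -
  have "chi \<in> borel_measurable mu" by measurable
  moreover have "(\<lambda>_. 0 :: real^3) \<in> borel_measurable mu" by simp
  moreover have "(\<integral>\<^sup>+ x. ennreal ((chi x)^2) \<partial>mu) < \<infinity>"
  proof (rule sq_int_fin)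
    fix x show "(chi x)^2 \<le> 1" using chi_bounds[of x] by (simp add: power_le_one)
  qed
  moreover have "(\<integral>\<^sup>+ x. ennreal ((norm (0::real^3))^2) \<partial>mu) < \<infinity>" by simp
  moreover have "\<forall>n. (\<lambda>n. chi) n \<in> Cc_inf" using chi_Cc by blast
  moreover have "(\<lambda>n. \<integral>\<^sup>+ x. ennreal (((\<lambda>n. chi) n x - chi x)^2) \<partial>mu) \<longlonglongrightarrow> 0" by simp
  moreover have "(\<lambda>n. \<integral>\<^sup>+ x. ennreal ((norm (grad_mu ((\<lambda>n. chi) n) x - 0))^2) \<partial>mu) \<longlonglongrightarrow> 0"
    using grad_chi_L2 by simp
  ultimately show ?thesis unfolding H12_def
    apply (simp only: mem_Collect_eq prod.case)
    apply (intro conjI exI[where x="\<lambda>n. chi"])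
    apply (assumption | rule TrueI)+
    done
qed

lemma embY_zero: "embY z = 0 \<longleftrightarrow> z = 0"
  by (simp add: vec_eq_iff forall_3)

lemma muA1: "emeasure mu (Yset - {0}) > 0"
proof -
  have m: "Yset - {0} \<in> sets borel" by measurable
  have "emeasure muY (Yset - {0}) = (\<integral>\<^sup>+ z. indicator {0..1} z * indicator (Yset - {0}) (embY z) \<partial>lborel)"
    using nn_muY[of "indicator (Yset - {0})"] m by simp
  also have "\<dots> = (\<integral>\<^sup>+ (z::real). indicator {0<..1} z \<partial>lborel)"
  proof -
    have z0: "indicator {0..1} z * indicator (Yset - {0}) (embY z) = (indicator {0<..1} z :: ennreal)" for z
      by (auto simp: Yset_def embY_zero split: split_indicator)
    show ?thesis by (simp only: z0)
  qed
  also have "\<dots> = 1" by simp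
  finally have "emeasure muY (Yset - {0}) = 1" .
  then show ?thesis using m by (simp add: emeasure_mu add_nonneg_pos)
qed

lemma muA2: "emeasure mu (Xset - Yset) > 0"
proof -
  have m: "Xset - Yset \<in> sets borel" by measurable
  define B where "B = cbox (\<chi> i::2. (1/4::real)) (\<chi> i. 1/2)"
  have "emeasure lborel B = ennreal ((1/2 - 1/4)^2)" unfolding B_def by (rule emeasure_cube2) simp
  then have pos: "emeasure lborel B > 0" by simp
  have "emeasure lborel B = (\<integral>\<^sup>+ q. indicator B q \<partial>lborel)" unfolding B_def by simp
  also have "\<dots> \<le> (\<integral>\<^sup>+ q. indicator D2 q * indicator (Xset - Yset) (embX q) \<partial>lborel)"
  proof (rule nn_integral_mono)
    fix q :: "real^2"
    show "indicator B q \<le> (indicator D2 q * indicator (Xset - Yset) (embX q) :: ennreal)"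
    proof (cases "q \<in> B")
      case True
      then have b: "1/4 \<le> q$1" "q$1 \<le> 1/2" "1/4 \<le> q$2" "q$2 \<le> 1/2"
        unfolding B_def mem_box_cart by auto
      have "q$1 * q$1 \<le> (1/2) * (1/2)" by (rule mult_mono) (use b in linarith)+
      moreover have "q$2 * q$2 \<le> (1/2) * (1/2)" by (rule mult_mono) (use b in linarith)+
      ultimately have "q$1 * q$1 + q$2 * q$2 \<le> 1" by linarith
      then have "q \<in> D2" by (simp add: D2_def power2_eq_square)
      moreover have "embX q \<in> Xset" using embX_X[OF \<open>q \<in> D2\<close>] .
      moreover have "embX q \<notin> Yset" using b by (simp add: Yset_def)
      ultimately show ?thesis using True by simp
    qed simp
  qed
  also have "\<dots> = emeasure muX (Xset - Yset)"
    using nn_muX[of "indicator (Xset - Yset)"] m by simp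
  finally have "emeasure muX (Xset - Yset) > 0" using pos by simp
  then show ?thesis using m by (simp add: emeasure_mu add_pos_nonneg)
qed

lemma AE_pos:
  assumes "AE x in mu. P x" "A \<in> sets borel" "emeasure mu A > 0"
  shows "\<exists>x\<in>A. P x"
proof (rule ccontr)
  assume "\<not> (\<exists>x\<in>A. P x)"
  then have "AE x in mu. x \<notin> A" using assms(1) by (auto elim!: eventually_mono)
  then have "emeasure mu A = 0" using AE_iff_measurable[of A mu "\<lambda>x. x \<notin> A"] assms(2) by simp
  then show False using assms(3) by simp
qed

lemma A1_vals: "x \<in> Yset - {0} \<Longrightarrow> u0 x = 1 \<and> chi x = 1"
  using chi_S by (auto simp: u0_def Sset_def)
lemma A2_vals: "x \<in> Xset - Yset \<Longrightarrow> u0 x = 0 \<and> chi x = 1"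
  using chi_S by (auto simp: u0_def Sset_def)

lemma var_pos: "(\<integral>x. (u0 x - c)^2 \<partial>mu) > 0"
proof -
  have meas: "(\<lambda>x. (u0 x - c)^2) \<in> borel_measurable mu" by measurable
  have bd: "AE x in mu. norm ((u0 x - c)^2) \<le> (1 + \<bar>c\<bar>)^2"
  proof (rule AE_I2)
    fix x
    have "\<bar>u0 x - c\<bar> \<le> 1 + \<bar>c\<bar>"
      using abs_triangle_ineq4[of 1 c] abs_triangle_ineq4[of 0 c] by (simp add: u0_def)
    then show "norm ((u0 x - c)^2) \<le> (1 + \<bar>c\<bar>)^2"
      by (simp add: power_mono abs_le_square_iff[symmetric])
  qed
  have int: "integrable mu (\<lambda>x. (u0 x - c)^2)"
    by (rule finite_measure.integrable_const_bound[OF fin_mu bd meas])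
  have ge: "0 \<le> (\<integral>x. (u0 x - c)^2 \<partial>mu)" by simp
  show ?thesis
  proof (rule ccontr)
    assume "\<not> 0 < (\<integral>x. (u0 x - c)^2 \<partial>mu)"
    then have "(\<integral>x. (u0 x - c)^2 \<partial>mu) = 0" using ge by simp
    then have ae: "AE x in mu. (u0 x - c)^2 = 0"
      using integral_nonneg_eq_0_iff_AE[OF int] by simp
    have "\<exists>x\<in>Yset - {0}. (u0 x - c)^2 = 0" by (rule AE_pos[OF ae _ muA1]) measurable
    then obtain x where x: "x \<in> Yset - {0}" "(u0 x - c)^2 = 0" by blast
    have "\<exists>y\<in>Xset - Yset. (u0 y - c)^2 = 0" by (rule AE_pos[OF ae _ muA2]) measurable
    then obtain y where y: "y \<in> Xset - Yset" "(u0 y - c)^2 = 0" by blast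
    show False using x y A1_vals[OF x(1)] A2_vals[OF y(1)] by simp
  qed
qed

theorem mainTheorem2:
  shows "(u0, (\<lambda>_. 0)) \<in> H12
    \<and> (\<exists>p1 \<in> ker_grad_mu. \<exists>p2 \<in> ker_grad_mu.
         \<forall>a b::real. ((AE x in mu. a * fst p1 x + b * fst p2 x = 0) \<and>
                      (AE x in mu. a *\<^sub>R snd p1 x + b *\<^sub>R snd p2 x = 0))
                     \<longrightarrow> a = 0 \<and> b = 0)
    \<and> (\<forall>C::real. \<exists>(u, g) \<in> H12.
         (\<integral>x. (u x - (\<integral>y. u y \<partial>mu) / measure mu Sset)^2 \<partial>mu)
           > C * (\<integral>x. (norm (g x))^2 \<partial>mu))"
proof (intro conjI)
  show "(u0, (\<lambda>_. 0)) \<in> H12" by (rule u0_H12)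
  have k1: "(u0, (\<lambda>_. 0)) \<in> ker_grad_mu" using u0_H12 by (simp add: ker_grad_mu_def)
  have k2: "(chi, (\<lambda>_. 0)) \<in> ker_grad_mu" using chi_H12 by (simp add: ker_grad_mu_def)
  have ind: "\<forall>a b::real. ((AE x in mu. a * u0 x + b * chi x = 0) \<and>
                      (AE x in mu. a *\<^sub>R (0::real^3) + b *\<^sub>R 0 = 0))
                     \<longrightarrow> a = 0 \<and> b = 0"
  proof (intro allI impI)
    fix a b :: real
    assume "(AE x in mu. a * u0 x + b * chi x = 0) \<and> (AE x in mu. a *\<^sub>R (0::real^3) + b *\<^sub>R 0 = 0)"
    then have ae: "AE x in mu. a * u0 x + b * chi x = 0" by blast
    have "\<exists>x\<in>Yset - {0}. a * u0 x + b * chi x = 0" by (rule AE_pos[OF ae _ muA1]) measurable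
    then obtain x where x: "x \<in> Yset - {0}" "a * u0 x + b * chi x = 0" by blast
    have "\<exists>y\<in>Xset - Yset. a * u0 y + b * chi y = 0" by (rule AE_pos[OF ae _ muA2]) measurable
    then obtain y where y: "y \<in> Xset - Yset" "a * u0 y + b * chi y = 0" by blast
    show "a = 0 \<and> b = 0" using x y A1_vals[OF x(1)] A2_vals[OF y(1)] by simp
  qed
  show "\<exists>p1 \<in> ker_grad_mu. \<exists>p2 \<in> ker_grad_mu.
         \<forall>a b::real. ((AE x in mu. a * fst p1 x + b * fst p2 x = 0) \<and>
                      (AE x in mu. a *\<^sub>R snd p1 x + b *\<^sub>R snd p2 x = 0))
                     \<longrightarrow> a = 0 \<and> b = 0"
    apply (rule bexI[OF _ k1])
    apply (rule bexI[OF _ k2])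
    unfolding fst_conv snd_conv by (rule ind)
  show "\<forall>C::real. \<exists>(u, g) \<in> H12.
         (\<integral>x. (u x - (\<integral>y. u y \<partial>mu) / measure mu Sset)^2 \<partial>mu)
           > C * (\<integral>x. (norm (g x))^2 \<partial>mu)"
  proof
    fix C :: real
    have z: "(\<integral>x. (norm (0::real^3))^2 \<partial>mu) = 0" by simp
    show "\<exists>(u, g) \<in> H12.
         (\<integral>x. (u x - (\<integral>y. u y \<partial>mu) / measure mu Sset)^2 \<partial>mu)
           > C * (\<integral>x. (norm (g x))^2 \<partial>mu)"
      apply (rule bexI[OF _ u0_H12])
      using var_pos[of "(\<integral>y. u0 y \<partial>mu) / measure mu Sset"] z by (simp only: prod.case mult_zero_right)
  qed
qed

end
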